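(* Let $m\geq 3$ and $n\geq 2$ be integers, let $C_m$ be the cycle of order $m$ and $H_n$ a graph of order $n$. Then $rvc(C_m\diamond H_n)=1$ if $m=3$, and $rvc(C_m\diamond H_n)=\lceil m/2\rceil$ if $m\geq 4$.
   Context: All graphs are finite, simple, connected and undirected. A rainbow vertex $k$-coloring of $G$ is a map $c:V(G)\to\{1,\dots,k\}$ such that every two vertices are joined by a path whose internal vertices all receive distinct colors; $rvc(G)$ is the least $k$ for which $G$ has one. For graphs $G_m$ (order $m$) and $H_n$ (order $n$) on disjoint vertex sets, the edge corona $G_m\diamond H_n$ is obtained from one copy of $G_m$ and $|E(G_m)|$ vertex-disjoint copies of $H_n$, one per edge of $G_m$, by joining both end vertices of the $j$-th edge of $G_m$ to every vertex of the $j$-th copy of $H_n$. *)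

theory Defs
  imports Complex_Main
begin

definition simple_graph :: "'a set \<Rightarrow> 'a set set \<Rightarrow> bool" where
  "simple_graph V E \<longleftrightarrow> finite V \<and>
     (\<forall>e\<in>E. \<exists>u v. e = {u, v} \<and> u \<noteq> v \<and> u \<in> V \<and> v \<in> V)"

definition is_path :: "'a set \<Rightarrow> 'a set set \<Rightarrow> 'a list \<Rightarrow> bool" where
  "is_path V E p \<longleftrightarrow> p \<noteq> [] \<and> distinct p \<and> set p \<subseteq> V \<and>
     (\<forall>i. Suc i < length p \<longrightarrow> {p ! i, p ! Suc i} \<in> E)"

definition connected_graph :: "'a set \<Rightarrow> 'a set set \<Rightarrow> bool" where
  "connected_graph V E \<longleftrightarrow> V \<noteq> {} \<and>
     (\<forall>u\<in>V. \<forall>v\<in>V. \<exists>p. is_path V E p \<and> hd p = u \<and> last p = v)"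

definition internal :: "'a list \<Rightarrow> 'a set" where
  "internal p = set (butlast (tl p))"

definition rainbow_vertex_coloring ::
    "'a set \<Rightarrow> 'a set set \<Rightarrow> nat \<Rightarrow> ('a \<Rightarrow> nat) \<Rightarrow> bool" where
  "rainbow_vertex_coloring V E k c \<longleftrightarrow>
     (\<forall>v\<in>V. c v \<in> {1..k}) \<and>
     (\<forall>u\<in>V. \<forall>v\<in>V. \<exists>p. is_path V E p \<and> hd p = u \<and> last p = v \<and>
                         inj_on c (internal p))"

definition rvc :: "'a set \<Rightarrow> 'a set set \<Rightarrow> nat" where
  "rvc V E = (LEAST k. \<exists>c. rainbow_vertex_coloring V E k c)"

definition cycle_V :: "nat \<Rightarrow> nat set" where
  "cycle_V m = {0..<m}"

definition cycle_E :: "nat \<Rightarrow> nat set set" where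
  "cycle_E m = {{i, Suc i mod m} | i. i < m}"

text \<open>Edge corona: vertices of G are Inl v; the copy of vertex h of H attached to
  the edge e of G is Inr (e, h).\<close>
definition corona_V :: "'a set \<Rightarrow> 'a set set \<Rightarrow> 'b set \<Rightarrow> ('a + ('a set \<times> 'b)) set" where
  "corona_V VG EG VH = Inl ` VG \<union> {Inr (e, h) | e h. e \<in> EG \<and> h \<in> VH}"

definition corona_E :: "'a set \<Rightarrow> 'a set set \<Rightarrow> 'b set \<Rightarrow> 'b set set
    \<Rightarrow> ('a + ('a set \<times> 'b)) set set" where
  "corona_E VG EG VH EH =
     {{Inl u, Inl v} | u v. {u, v} \<in> EG}
     \<union> {{Inr (e, x), Inr (e, y)} | e x y. e \<in> EG \<and> {x, y} \<in> EH}
     \<union> {{Inl u, Inr (e, h)} | u e h. e \<in> EG \<and> u \<in> e \<and> h \<in> VH}"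

end

theory Submission
  imports Defs
begin

definition ce :: "nat \<Rightarrow> nat \<Rightarrow> nat set" where "ce m b = {b, Suc b mod m}"

fun walk :: "'a set set \<Rightarrow> 'a list \<Rightarrow> bool" where
  "walk E [] = True"
| "walk E [x] = True"
| "walk E (x # y # p) = ({x,y} \<in> E \<and> walk E (y # p))"

lemma walk_iff: "walk E p \<longleftrightarrow> (\<forall>i. Suc i < length p \<longrightarrow> {p ! i, p ! Suc i} \<in> E)"
proof (induction E p rule: walk.induct)
  case (3 E x y p)
  show ?case
  proof
    assume "walk E (x#y#p)"
    then have A: "{x,y} \<in> E" "\<forall>i. Suc i < length (y#p) \<longrightarrow> {(y#p) ! i, (y#p) ! Suc i} \<in> E" using 3 by auto
    show "\<forall>i. Suc i < length (x#y#p) \<longrightarrow> {(x#y#p) ! i, (x#y#p) ! Suc i} \<in> E"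
    proof (intro allI impI)
      fix i assume "Suc i < length (x#y#p)"
      then show "{(x#y#p) ! i, (x#y#p) ! Suc i} \<in> E"
        using A by (cases i) auto
    qed
  next
    assume H: "\<forall>i. Suc i < length (x#y#p) \<longrightarrow> {(x#y#p) ! i, (x#y#p) ! Suc i} \<in> E"
    have "{x,y} \<in> E" using H[rule_format, of 0] by simp
    moreover have "\<forall>i. Suc i < length (y#p) \<longrightarrow> {(y#p) ! i, (y#p) ! Suc i} \<in> E"
      using H by (metis Suc_less_eq length_Cons nth_Cons_Suc)
    ultimately show "walk E (x#y#p)" using 3 by simp
  qed
qed auto

lemma is_path_walk: "is_path V E p \<longleftrightarrow> p \<noteq> [] \<and> distinct p \<and> set p \<subseteq> V \<and> walk E p"
  by (simp add: is_path_def walk_iff)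

lemma walk_rev: "walk E p \<Longrightarrow> walk E (rev p)"
  unfolding walk_iff
proof (intro allI impI)
  fix i assume H: "\<forall>i. Suc i < length p \<longrightarrow> {p ! i, p ! Suc i} \<in> E" and i: "Suc i < length (rev p)"
  define j where "j = length p - Suc (Suc i)"
  have "Suc j < length p" using i j_def by auto
  then have "{p ! j, p ! Suc j} \<in> E" using H by auto
  moreover have "rev p ! i = p ! Suc j" "rev p ! Suc i = p ! j" using i j_def by (auto simp: rev_nth Suc_diff_Suc)
  ultimately show "{rev p ! i, rev p ! Suc i} \<in> E" by (simp add: insert_commute)
qed

lemma tl_rev': "tl (rev xs) = rev (butlast xs)"
  by (metis butlast_rev rev_rev_ident)

lemma internal_rev: "internal (rev p) = internal p"
  by (simp add: internal_def butlast_tl tl_rev')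

lemma path_rev: "is_path V E p \<Longrightarrow> is_path V E (rev p)"
  by (simp add: is_path_walk walk_rev)

fun arc :: "nat \<Rightarrow> nat \<Rightarrow> nat \<Rightarrow> (nat + 'x) list" where
  "arc m s 0 = []"
| "arc m s (Suc L) = Inl (s mod m) # arc m (Suc s) L"

lemma set_arc_img: "set (arc m s L :: (nat + 'x) list) = (\<lambda>t. Inl ((s+t) mod m)) ` {..<L}"
proof (induction L arbitrary: s)
  case 0 then show ?case by simp
next
  case (Suc L)
  have A: "((\<lambda>t. Inl ((s+t) mod m)) ` {..<Suc L} :: (nat + 'x) set)
      = insert (Inl (s mod m)) ((\<lambda>t. Inl ((s + Suc t) mod m)) ` {..<L})"
    by (simp add: lessThan_Suc_eq_insert_0 image_image)
  have "set (arc m s (Suc L) :: (nat + 'x) list) = insert (Inl (s mod m)) (set (arc m (Suc s) L))" by simp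
  also have "\<dots> = insert (Inl (s mod m)) ((\<lambda>t. Inl ((Suc s + t) mod m)) ` {..<L})" by (simp only: Suc.IH)
  also have "(\<lambda>t. Inl ((Suc s + t) mod m)) = (\<lambda>t. Inl ((s + Suc t) mod m))" by simp
  finally have B: "set (arc m s (Suc L) :: (nat + 'x) list) = insert (Inl (s mod m)) ((\<lambda>t. Inl ((s + Suc t) mod m)) ` {..<L})" .
  show ?case by (simp only: A B)
qed

lemma set_arc: "z \<in> set (arc m s L) \<longleftrightarrow> (\<exists>t<L. z = Inl ((s+t) mod m))"
  by (auto simp: set_arc_img)

lemma modm: "s + t < 2*m \<Longrightarrow> (s+t) mod (m::nat) = (if s+t < m then s+t else s+t-m)"
proof (cases "s + t < m")
  case True then show ?thesis by simp
next
  case False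
  assume "s + t < 2*m"
  then have "s + t - m < m" using False by linarith
  moreover have "(s+t) mod m = (s+t-m) mod m" using False le_mod_geq by (metis not_less)
  ultimately show ?thesis using False by simp
qed

lemma mod_shift_ne: "0 < b \<Longrightarrow> b < (m::nat) \<Longrightarrow> (s+b) mod m \<noteq> s mod m"
proof
  assume b: "0 < b" "b < m" and e: "(s+b) mod m = s mod m"
  define r where "r = s mod m"
  have r: "r < m" using b r_def by simp
  have "(s+b) mod m = (r + b) mod m" by (simp add: r_def mod_add_left_eq)
  also have "\<dots> = (if r+b < m then r+b else r+b-m)" using modm[of r b m] r b by linarith
  finally have "r = (if r+b < m then r+b else r+b-m)" using e r_def by simp
  then show False using b r by (simp split: if_splits)
qed

lemma distinct_arc: "L \<le> m \<Longrightarrow> distinct (arc m s L)"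
proof (induction L arbitrary: s)
  case 0 then show ?case by simp
next
  case (Suc L)
  have "Inl (s mod m) \<notin> set (arc m (Suc s) L)"
  proof
    assume "Inl (s mod m) \<in> set (arc m (Suc s) L)"
    then obtain t where "t < L" "(Suc s + t) mod m = s mod m" by (auto simp: set_arc)
    then show False using mod_shift_ne[of "Suc t" m s] Suc.prems by simp
  qed
  then show ?case using Suc by simp
qed

lemma walk_arc:
  assumes cyc: "\<And>b. b < m \<Longrightarrow> {Inl b, Inl (Suc b mod m)} \<in> E" and m: "0 < m"
  shows "0 < L \<Longrightarrow> {u, Inl (s mod m)} \<in> E \<Longrightarrow> {Inl ((s+L-1) mod m), v} \<in> E
     \<Longrightarrow> walk E (u # arc m s L @ [v])"
proof (induction L arbitrary: u s)
  case 0 then show ?case by simp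
next
  case (Suc L)
  show ?case
  proof (cases L)
    case 0 then show ?thesis using Suc by simp
  next
    case (Suc L')
    have "{Inl (s mod m), Inl (Suc s mod m)} \<in> E" using cyc[of "s mod m"] m by (simp add: mod_Suc_eq)
    moreover have "{Inl ((Suc s + L - 1) mod m), v} \<in> E" using Suc.prems Suc by simp
    ultimately have "walk E (Inl (s mod m) # arc m (Suc s) L @ [v])" using Suc.IH Suc by simp
    then show ?thesis using Suc.prems by simp
  qed
qed

lemma internal_mid: "internal (u # xs @ [v]) = set xs"
  by (simp add: internal_def)


lemma suc_mod: "b < m \<Longrightarrow> Suc b mod m = (if Suc b < m then Suc b else 0)"
proof (cases "Suc b < m")
  case False
  assume "b < m"
  then have "Suc b = m" using False by simp
  then show ?thesis by simp
qed simp

locale cor =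
  fixes m :: nat and VH :: "'b set" and EH :: "'b set set"
  assumes m3: "3 \<le> m" and VHne: "VH \<noteq> {}"
begin

abbreviation "V \<equiv> corona_V (cycle_V m) (cycle_E m) VH"
abbreviation "CE \<equiv> corona_E (cycle_V m) (cycle_E m) VH EH"

lemma cycE: "cycle_E m = ce m ` {..<m}"
  by (auto simp: cycle_E_def ce_def)

lemma Vdef: "V = Inl ` {..<m} \<union> {Inr (ce m b, h) | b h. b < m \<and> h \<in> VH}"
  unfolding corona_V_def cycE cycle_V_def by auto

lemma inlV: "a < m \<Longrightarrow> Inl a \<in> V"
  by (simp add: Vdef)

lemma inrV: "b < m \<Longrightarrow> h \<in> VH \<Longrightarrow> Inr (ce m b, h) \<in> V"
  by (auto simp: Vdef)

lemma edge_ll: "b < m \<Longrightarrow> {Inl b, Inl (Suc b mod m)} \<in> CE"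
  unfolding corona_E_def cycle_E_def by blast

lemma edge_lr: assumes "b < m" "h \<in> VH" "x \<in> ce m b"
  shows "{Inl x, Inr (ce m b, h)} \<in> CE" "{Inr (ce m b, h), Inl x} \<in> CE"
proof -
  have "ce m b \<in> cycle_E m" using assms by (simp add: cycE)
  then show "{Inl x, Inr (ce m b, h)} \<in> CE" unfolding corona_E_def using assms by blast
  then show "{Inr (ce m b, h), Inl x} \<in> CE" by (simp add: insert_commute)
qed

lemma ce_inj: assumes "b < m" "b' < m" "ce m b = ce m b'" shows "b = b'"
proof -
  have "{b, Suc b mod m} = {b', Suc b' mod m}" using assms by (simp add: ce_def)
  then have "(b = b' \<and> Suc b mod m = Suc b' mod m) \<or> (b = Suc b' mod m \<and> Suc b mod m = b')"
    by (simp add: doubleton_eq_iff)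
  then show ?thesis using assms m3 by (auto simp: suc_mod split: if_splits)
qed

definition idx :: "nat set \<Rightarrow> nat" where "idx e = (THE b. b < m \<and> e = ce m b)"

lemma idx_ce: "b < m \<Longrightarrow> idx (ce m b) = b"
  unfolding idx_def by (rule the_equality) (auto dest: ce_inj)

definition goodp :: "(nat + nat set \<times> 'b) \<Rightarrow> (nat + nat set \<times> 'b) \<Rightarrow> bool" where
  "goodp u v \<longleftrightarrow> (\<exists>p s L. is_path V CE p \<and> hd p = u \<and> last p = v \<and> L \<le> m div 2 \<and>
       internal p \<subseteq> set (arc m s L))"

lemma goodp_sym: "goodp u v \<Longrightarrow> goodp v u"
  unfolding goodp_def
proof (elim exE conjE)
  fix p s L assume "is_path V CE p" "hd p = u" "last p = v" "L \<le> m div 2" "internal p \<subseteq> set (arc m s L :: (nat + nat set \<times> 'b) list)"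
  moreover have "p \<noteq> []" using \<open>is_path V CE p\<close> by (simp add: is_path_def)
  ultimately show "\<exists>p s L. is_path V CE p \<and> hd p = v \<and> last p = u \<and> L \<le> m div 2 \<and> internal p \<subseteq> set (arc m s L :: (nat + nat set \<times> 'b) list)"
    by (intro exI[of _ "rev p"] exI[of _ s] exI[of _ L]) (auto simp: path_rev internal_rev hd_rev last_rev)
qed

lemma goodp_refl: "u \<in> V \<Longrightarrow> goodp u u"
  unfolding goodp_def
  by (intro exI[of _ "[u]"] exI[of _ 0] exI[of _ 0]) (auto simp: is_path_def internal_def)

lemma goodp_adj: "u \<in> V \<Longrightarrow> v \<in> V \<Longrightarrow> u \<noteq> v \<Longrightarrow> {u, v} \<in> CE \<Longrightarrow> goodp u v"
  unfolding goodp_def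
  by (intro exI[of _ "[u,v]"] exI[of _ 0] exI[of _ 0]) (auto simp: is_path_walk internal_def)

lemma goodp_arc:
  assumes "u \<in> V" "v \<in> V" "u \<noteq> v" "0 < L" "L \<le> m div 2"
    "\<forall>t<L. u \<noteq> Inl ((s+t) mod m)" "\<forall>t<L. v \<noteq> Inl ((s+t) mod m)"
    "{u, Inl (s mod m)} \<in> CE" "{Inl ((s+L-1) mod m), v} \<in> CE"
  shows "goodp u v"
proof -
  let ?A = "arc m s L :: (nat + nat set \<times> 'b) list"
  let ?p = "u # ?A @ [v]"
  have m0: "0 < m" using m3 by simp
  have w: "walk CE ?p"
    by (rule walk_arc[OF edge_ll m0]) (use assms in auto)
  have d: "distinct ?A" using assms by (intro distinct_arc) auto
  have uA: "u \<notin> set ?A" "v \<notin> set ?A" using assms(6,7) by (auto simp: set_arc)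
  have AV: "set ?A \<subseteq> V" using m0 by (auto simp: set_arc intro!: inlV)
  have "is_path V CE ?p" using w d uA AV assms(1-3) by (auto simp: is_path_walk)
  moreover have "internal ?p = set ?A" by (rule internal_mid)
  ultimately show ?thesis unfolding goodp_def using assms(5)
    by (intro exI[of _ ?p] exI[of _ s] exI[of _ L]) auto
qed

end


lemma mod_plus_m: "x < (m::nat) \<Longrightarrow> (x + m) mod m = x" by simp

lemma mod_wrap: "(m::nat) \<le> n \<Longrightarrow> n < 2*m \<Longrightarrow> n mod m = n - m"
  using modm[of n 0 m] by simp

context cor
begin

lemma edge_pred: "a < m \<Longrightarrow> {Inl (if a = 0 then m-1 else a-1), Inl a} \<in> CE"
proof -
  assume a: "a < m"
  let ?i = "if a = 0 then m-1 else a-1"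
  have i: "?i < m" using a m3 by auto
  have "Suc ?i mod m = a" using a m3 by (auto simp: suc_mod)
  then show ?thesis using edge_ll[OF i] by simp
qed

lemma good_LL_lt: assumes ab: "a < b" "b < m" shows "goodp (Inl a) (Inl b)"
proof -
  let ?N = "m div 2"
  have aV: "Inl a \<in> V" "Inl b \<in> V" using ab by (auto intro: inlV)
  show ?thesis
  proof (cases "b = Suc a")
    case True
    then have "Suc a mod m = b" using ab by simp
    then show ?thesis using edge_ll[of a] ab aV by (intro goodp_adj) auto
  next
    case False
    show ?thesis
    proof (cases "b - a - 1 \<le> ?N")
      case True
      let ?L = "b - a - 1"
      have e1: "{Inl a, Inl ((a+1) mod m)} \<in> CE" using edge_ll[of a] ab by simp
      have "(a+1+?L-1) mod m = b - 1" using ab False by simp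
      moreover have "{Inl (b-1), Inl b} \<in> CE" using edge_ll[of "b-1"] ab by simp
      ultimately have e2: "{Inl ((a+1+?L-1) mod m), Inl b} \<in> CE" by simp
      have av: "\<forall>t<?L. Inl a \<noteq> (Inl ((a+1+t) mod m) :: (nat + nat set \<times> 'b))
         \<and> Inl b \<noteq> (Inl ((a+1+t) mod m) :: (nat + nat set \<times> 'b))" using ab by auto
      show ?thesis using av e1 e2 aV ab True False by (intro goodp_arc[where s="a+1" and L="?L"]) auto
    next
      case False2: False
      have "goodp (Inl b) (Inl a)"
      proof (cases "b = m - 1 \<and> a = 0")
        case True
        have "{Inl b, Inl a} \<in> CE" using edge_ll[of b] True ab by (simp add: suc_mod)
        then show ?thesis using aV ab by (intro goodp_adj) auto
      next
        case nt: False
        let ?L = "m - b - 1 + a"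
        have L1: "0 < ?L" using nt ab by auto
        have L2: "?L \<le> ?N" using False2 ab by linarith
        have e1: "{Inl b, Inl ((b+1) mod m)} \<in> CE" using edge_ll[of b] ab by simp
        have eq: "b+1+?L-1 = m + a - 1" using ab L1 by linarith
        have "(b+1+?L-1) mod m = (if a = 0 then m-1 else a-1)"
        proof (cases "a = 0")
          case True then show ?thesis using eq m3 by simp
        next
          case False
          then have "b+1+?L-1 = (a-1) + m" using eq by linarith
          then have "(b+1+?L-1) mod m = ((a-1) + m) mod m" by (simp only:)
          also have "\<dots> = a - 1" using ab by (intro mod_plus_m) auto
          finally show ?thesis using False by simp
        qed
        then have e2: "{Inl ((b+1+?L-1) mod m), Inl a} \<in> CE" using edge_pred[of a] ab by simp
        have av: "\<forall>t<?L. Inl b \<noteq> (Inl ((b+1+t) mod m) :: (nat + nat set \<times> 'b))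
           \<and> Inl a \<noteq> (Inl ((b+1+t) mod m) :: (nat + nat set \<times> 'b))"
        proof (intro allI impI)
          fix t assume t: "t < ?L"
          have "(b+1+t) mod m = (if b+1+t < m then b+1+t else b+1+t-m)"
            using modm[of "b+1" t m] t ab by linarith
          then show "Inl b \<noteq> (Inl ((b+1+t) mod m) :: (nat + nat set \<times> 'b))
           \<and> Inl a \<noteq> (Inl ((b+1+t) mod m) :: (nat + nat set \<times> 'b))" using t ab by auto
        qed
        show ?thesis using av e1 e2 aV ab L1 L2 by (intro goodp_arc[where s="b+1" and L="?L"]) auto
      qed
      then show ?thesis by (rule goodp_sym)
    qed
  qed
qed

lemma good_LL: assumes "a < m" "b < m" shows "goodp (Inl a) (Inl b)"
proof -
  consider "a < b" | "a = b" | "b < a" by linarith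
  then show ?thesis
  proof cases
    case 1 then show ?thesis using assms good_LL_lt by auto
  next
    case 2 then show ?thesis using assms by (auto intro: goodp_refl inlV)
  next
    case 3 then show ?thesis using assms good_LL_lt goodp_sym by blast
  qed
qed

end


lemma pred_mod: "n = m + a - 1 \<Longrightarrow> a < (m::nat) \<Longrightarrow> n mod m = (if a = 0 then m-1 else a-1)"
proof (cases "a = 0")
  case True
  assume "n = m + a - 1" "a < m"
  then show ?thesis using True by simp
next
  case False
  assume n: "n = m + a - 1" and a: "a < m"
  then have "n = (a-1) + m" using False by linarith
  then have "n mod m = ((a-1) + m) mod m" by (simp only:)
  also have "\<dots> = a - 1" using a by (intro mod_plus_m) auto
  finally show ?thesis using False by simp
qed

context cor
begin

lemma good_LR: assumes a: "a < m" and j: "j < m" and h: "h \<in> VH"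
  shows "goodp (Inl a) (Inr (ce m j, h))"
proof -
  let ?N = "m div 2"
  let ?u = "Inl a :: nat + nat set \<times> 'b"
  let ?v = "Inr (ce m j, h) :: nat + nat set \<times> 'b"
  have uV: "?u \<in> V" "?v \<in> V" using a j h by (auto intro: inlV inrV)
  have jce: "j \<in> ce m j" "Suc j mod m \<in> ce m j" by (auto simp: ce_def)
  show ?thesis
  proof (cases "a \<in> ce m j")
    case True
    then show ?thesis using edge_lr(1)[OF j h True] uV by (intro goodp_adj) auto
  next
    case False
    then have aj: "a \<noteq> j" "a \<noteq> Suc j mod m" by (auto simp: ce_def)
    have ev: "{Inl j, ?v} \<in> CE" using edge_lr(1)[OF j h jce(1)] .
    have ev2: "{?v, Inl (Suc j mod m)} \<in> CE" using edge_lr(2)[OF j h jce(2)] .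
    have ea: "{?u, Inl ((a+1) mod m)} \<in> CE" using edge_ll[OF a] by simp
    show ?thesis
    proof (cases "a < j")
      case True
      let ?L1 = "j - a"
      let ?L2 = "m - 1 - j + a"
      show ?thesis
      proof (cases "?L1 \<le> ?N")
        case True
        have "a+1+?L1-1 = j" using \<open>a < j\<close> by simp
        then have "(a+1+?L1-1) mod m = j" using j by simp
        then have e2: "{Inl ((a+1+?L1-1) mod m), ?v} \<in> CE" using ev by simp
        have av: "\<forall>t<?L1. ?u \<noteq> Inl ((a+1+t) mod m) \<and> ?v \<noteq> Inl ((a+1+t) mod m)"
          using \<open>a < j\<close> j by auto
        show ?thesis using av ea e2 uV True \<open>a < j\<close> by (intro goodp_arc[where s="a+1" and L="?L1"]) auto
      next
        case False
        have L1: "0 < ?L2"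
        proof (cases "Suc j < m")
          case True then show ?thesis by simp
        next
          case False then have "Suc j mod m = 0" using j by (simp add: suc_mod)
          then show ?thesis using aj by simp
        qed
        have L2: "?L2 \<le> ?N" using False \<open>a < j\<close> j by linarith
        have "(Suc j + ?L2 - 1) mod m = (if a = 0 then m-1 else a-1)"
          using L1 \<open>a < j\<close> j a by (intro pred_mod) auto
        then have e2: "{Inl ((Suc j + ?L2 - 1) mod m), ?u} \<in> CE" using edge_pred[OF a] by simp
        have av: "\<forall>t<?L2. ?u \<noteq> Inl ((Suc j+t) mod m) \<and> ?v \<noteq> Inl ((Suc j+t) mod m)"
        proof (intro allI impI)
          fix t assume t: "t < ?L2"
          have "(Suc j+t) mod m = (if Suc j+t < m then Suc j+t else Suc j+t-m)"
            using t j a by (intro modm) linarith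
          then show "?u \<noteq> Inl ((Suc j+t) mod m) \<and> ?v \<noteq> Inl ((Suc j+t) mod m)"
            using t \<open>a < j\<close> j by auto
        qed
        have "goodp ?v ?u" using av ev2 e2 uV L1 L2
          by (intro goodp_arc[where s="Suc j" and L="?L2"]) auto
        then show ?thesis by (rule goodp_sym)
      qed
    next
      case False
      then have ja: "j < a" using aj by simp
      then have sj: "Suc j < m" using a by simp
      then have ja2: "Suc j < a" using aj ja by simp
      let ?L1 = "m - a + j"
      let ?L2 = "a - j - 1"
      show ?thesis
      proof (cases "?L1 \<le> ?N")
        case True
        have "a+1+?L1-1 = j + m" using a by simp
        then have "(a+1+?L1-1) mod m = j" using j by simp
        then have e2: "{Inl ((a+1+?L1-1) mod m), ?v} \<in> CE" using ev by simp
        have av: "\<forall>t<?L1. ?u \<noteq> Inl ((a+1+t) mod m) \<and> ?v \<noteq> Inl ((a+1+t) mod m)"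
        proof (intro allI impI)
          fix t assume t: "t < ?L1"
          have "(a+1+t) mod m = (if a+1+t < m then a+1+t else a+1+t-m)"
            using t j a by (intro modm) linarith
          then show "?u \<noteq> Inl ((a+1+t) mod m) \<and> ?v \<noteq> Inl ((a+1+t) mod m)"
            using t ja a by auto
        qed
        show ?thesis using av ea e2 uV True a by (intro goodp_arc[where s="a+1" and L="?L1"]) auto
      next
        case False
        have L1: "0 < ?L2" using ja2 by simp
        have L2: "?L2 \<le> ?N" using False ja a by linarith
        have "(Suc j + ?L2 - 1) mod m = (if a = 0 then m-1 else a-1)"
          using ja2 a by simp
        then have e2: "{Inl ((Suc j + ?L2 - 1) mod m), ?u} \<in> CE" using edge_pred[OF a] by simp
        have av: "\<forall>t<?L2. ?u \<noteq> Inl ((Suc j+t) mod m) \<and> ?v \<noteq> Inl ((Suc j+t) mod m)"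
          using ja2 a by auto
        have "goodp ?v ?u" using av ev2 e2 uV L1 L2
          by (intro goodp_arc[where s="Suc j" and L="?L2"]) auto
        then show ?thesis by (rule goodp_sym)
      qed
    qed
  qed
qed

lemma good_RR_lt: assumes i: "i < j" and j: "j < m" and h: "h \<in> VH" "h' \<in> VH"
  shows "goodp (Inr (ce m i, h)) (Inr (ce m j, h'))"
proof -
  let ?N = "m div 2"
  let ?u = "Inr (ce m i, h) :: nat + nat set \<times> 'b"
  let ?v = "Inr (ce m j, h') :: nat + nat set \<times> 'b"
  have im: "i < m" using i j by simp
  have uV: "?u \<in> V" "?v \<in> V" using im j h by (auto intro: inrV)
  have ne: "?u \<noteq> ?v" using ce_inj[OF im j] i by auto
  have ce: "i \<in> ce m i" "Suc i mod m \<in> ce m i" "j \<in> ce m j" "Suc j mod m \<in> ce m j"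
    by (auto simp: ce_def)
  let ?L1 = "j - i"
  let ?L2 = "m - j + i"
  show ?thesis
  proof (cases "?L1 \<le> ?N")
    case True
    have "Suc i + ?L1 - 1 = j" using i by simp
    then have "(Suc i + ?L1 - 1) mod m = j" using j by simp
    then have e2: "{Inl ((Suc i + ?L1 - 1) mod m), ?v} \<in> CE" using edge_lr(1)[OF j h(2) ce(3)] by simp
    have e1: "{?u, Inl (Suc i mod m)} \<in> CE" using edge_lr(2)[OF im h(1) ce(2)] .
    show ?thesis using e1 e2 uV ne True i by (intro goodp_arc[where s="Suc i" and L="?L1"]) auto
  next
    case False
    have L2: "?L2 \<le> ?N" using False i j by linarith
    have "Suc j + ?L2 - 1 = i + m" using j by simp
    then have "(Suc j + ?L2 - 1) mod m = i" using im by simp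
    then have e2: "{Inl ((Suc j + ?L2 - 1) mod m), ?u} \<in> CE" using edge_lr(1)[OF im h(1) ce(1)] by simp
    have e1: "{?v, Inl (Suc j mod m)} \<in> CE" using edge_lr(2)[OF j h(2) ce(4)] .
    have "goodp ?v ?u" using e1 e2 uV ne L2 j by (intro goodp_arc[where s="Suc j" and L="?L2"]) auto
    then show ?thesis by (rule goodp_sym)
  qed
qed

lemma good_RR: assumes i: "i < m" and j: "j < m" and h: "h \<in> VH" "h' \<in> VH"
  shows "goodp (Inr (ce m i, h)) (Inr (ce m j, h'))"
proof -
  consider "i < j" | "i = j" | "j < i" by linarith
  then show ?thesis
  proof cases
    case 1 then show ?thesis using good_RR_lt assms by blast
  next
    case 3 then show ?thesis using good_RR_lt assms goodp_sym by blast
  next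
    case 2
    let ?u = "Inr (ce m i, h) :: nat + nat set \<times> 'b"
    let ?v = "Inr (ce m j, h') :: nat + nat set \<times> 'b"
    have uV: "?u \<in> V" "?v \<in> V" using i j h by (auto intro: inrV)
    show ?thesis
    proof (cases "h = h'")
      case True then show ?thesis using 2 uV goodp_refl by simp
    next
      case False
      have ce: "i \<in> ce m i" by (auto simp: ce_def)
      have e1: "{?u, Inl (i mod m)} \<in> CE" using edge_lr(2)[OF i h(1) ce] i by simp
      have e2: "{Inl ((i + 1 - 1) mod m), ?v} \<in> CE" using edge_lr(1)[OF i h(2) ce] i 2 by simp
      have N: "1 \<le> m div 2" using m3 by linarith
      show ?thesis using e1 e2 uV False N by (intro goodp_arc[where s="i" and L="1"]) auto
    qed
  qed
qed

lemma good_all: assumes "u \<in> V" "v \<in> V" shows "goodp u v"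
proof -
  have cs: "\<And>w. w \<in> V \<Longrightarrow> (\<exists>a. a < m \<and> w = Inl a) \<or> (\<exists>b h. b < m \<and> h \<in> VH \<and> w = Inr (ce m b, h))"
    by (auto simp: Vdef)
  from cs[OF assms(1)] cs[OF assms(2)] show ?thesis
    using good_LL good_LR good_RR goodp_sym by blast
qed

end


lemma dvd_between: assumes "(K::nat) dvd n" "0 < n" "n \<noteq> K" "n < 2*K" shows False
proof -
  from assms(1) obtain q where n: "n = K*q" by blast
  consider "q = 0" | "q = 1" | "q \<ge> 2" by linarith
  then show False
  proof cases
    case 1 then show ?thesis using n assms by simp
  next
    case 2 then show ?thesis using n assms by simp
  next
    case 3
    then have "K*2 \<le> K*q" by simp
    then show ?thesis using n assms by linarith
  qed
qed

lemma col_arith_lt: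
  fixes m L t t' s :: nat
  assumes m: "0 < m" and L: "L \<le> m div 2" and tt: "t < t'" "t' < L"
    and eq: "((s+t) mod m) mod (m - m div 2) = ((s+t') mod m) mod (m - m div 2)"
  shows False
proof -
  define K where "K = m - m div 2"
  define s' where "s' = s mod m"
  have s': "s' < m" using m s'_def by simp
  have x: "(s+t) mod m = (s'+t) mod m" "(s+t') mod m = (s'+t') mod m"
    by (simp_all add: s'_def mod_add_left_eq)
  have t'm: "t' < m" using tt L by linarith
  have xe: "(s'+t) mod m = (if s'+t < m then s'+t else s'+t-m)" using s' tt t'm by (intro modm) linarith
  have ye: "(s'+t') mod m = (if s'+t' < m then s'+t' else s'+t'-m)" using s' tt t'm by (intro modm) linarith
  have eq': "((s'+t) mod m) mod K = ((s'+t') mod m) mod K" using eq x K_def by simp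
  have dK: "t' - t < K" using tt L K_def by linarith
  consider "s'+t' < m" | "s'+t < m" "m \<le> s'+t'" | "m \<le> s'+t" by linarith
  then show False
  proof cases
    case 1
    then have "(s'+t') mod K = (s'+t) mod K" using eq' xe ye tt by simp
    then have "K dvd (s'+t') - (s'+t)" using tt by (subst (asm) mod_eq_dvd_iff_nat) auto
    then have "K dvd t' - t" by simp
    then show False using dK tt by (auto dest: dvd_imp_le)
  next
    case 2
    then have "(s'+t) mod K = (s'+t'-m) mod K" using eq' xe ye tt by simp
    then have "K dvd (s'+t) - (s'+t'-m)" using tt 2 s' t'm by (subst (asm) mod_eq_dvd_iff_nat) auto
    moreover have "(s'+t) - (s'+t'-m) = m - (t' - t)" using 2 tt by linarith
    ultimately have "K dvd m - (t'-t)" by simp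
    moreover have "K < m - (t'-t)" "m - (t'-t) < 2*K" using K_def tt L by linarith+
    ultimately show False using dvd_between[of K "m - (t'-t)"] by linarith
  next
    case 3
    then have "(s'+t'-m) mod K = (s'+t-m) mod K" using eq' xe ye tt by simp
    then have "K dvd (s'+t'-m) - (s'+t-m)" using tt 3 by (subst (asm) mod_eq_dvd_iff_nat) auto
    moreover have "(s'+t'-m) - (s'+t-m) = t' - t" using 3 tt by linarith
    ultimately have "K dvd t' - t" by simp
    then show False using dK tt by (auto dest: dvd_imp_le)
  qed
qed

lemma col_arith:
  fixes m L t t' s :: nat
  assumes "0 < m" "L \<le> m div 2" "t < L" "t' < L"
    and "((s+t) mod m) mod (m - m div 2) = ((s+t') mod m) mod (m - m div 2)"
  shows "t = t'"
proof (rule ccontr)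
  assume "t \<noteq> t'"
  then consider "t < t'" | "t' < t" by linarith
  then show False
  proof cases
    case 1 then show ?thesis using col_arith_lt[of m L t t' s] assms by blast
  next
    case 2 then show ?thesis using col_arith_lt[of m L t' t s] assms by simp
  qed
qed

context cor
begin

definition colK :: "nat \<Rightarrow> (nat + nat set \<times> 'b) \<Rightarrow> nat" where
  "colK K y = (case y of Inl i \<Rightarrow> i mod K + 1 | Inr _ \<Rightarrow> 1)"

definition Kt :: nat where "Kt = (if m = 3 then 1 else m - m div 2)"

lemma Kt_pos: "0 < Kt" using m3 by (auto simp: Kt_def)

lemma inj_arc: assumes "L \<le> m div 2"
  shows "inj_on (colK Kt) (set (arc m s L :: (nat + nat set \<times> 'b) list))"
proof (cases "m = 3")
  case True
  then have "L \<le> 1" using assms by simp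
  have "set (arc m s L :: (nat + nat set \<times> 'b) list) \<subseteq> {Inl (s mod m)}"
  proof
    fix z assume "z \<in> set (arc m s L :: (nat + nat set \<times> 'b) list)"
    then obtain t where "t < L" "z = Inl ((s+t) mod m)" by (auto simp: set_arc)
    moreover have "t = 0" using \<open>t < L\<close> \<open>L \<le> 1\<close> by linarith
    ultimately show "z \<in> {Inl (s mod m)}" by simp
  qed
  then show ?thesis by (rule inj_on_subset[rotated]) simp
next
  case False
  then have K: "Kt = m - m div 2" by (simp add: Kt_def)
  show ?thesis
  proof (rule inj_onI)
    fix x y assume x: "x \<in> set (arc m s L :: (nat + nat set \<times> 'b) list)" and y: "y \<in> set (arc m s L :: (nat + nat set \<times> 'b) list)"
      and e: "colK Kt x = colK Kt y"
    from x obtain t where t: "t < L" "x = Inl ((s+t) mod m)" by (auto simp: set_arc)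
    from y obtain t' where t': "t' < L" "y = Inl ((s+t') mod m)" by (auto simp: set_arc)
    have "((s+t) mod m) mod (m - m div 2) = ((s+t') mod m) mod (m - m div 2)"
      using e t t' K by (simp add: colK_def)
    then have "t = t'" using col_arith[of m L t t' s] t t' assms m3 by simp
    then show "x = y" using t t' by simp
  qed
qed

lemma upper: "rainbow_vertex_coloring V CE Kt (colK Kt)"
  unfolding rainbow_vertex_coloring_def
proof (intro conjI ballI)
  fix v assume "v \<in> V"
  show "colK Kt v \<in> {1..Kt}" using Kt_pos
    by (cases v) (auto simp: colK_def Suc_le_eq)
next
  fix u v assume uv: "u \<in> V" "v \<in> V"
  then have "goodp u v" by (rule good_all)
  then obtain p s L where p: "is_path V CE p" "hd p = u" "last p = v" "L \<le> m div 2"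
    "internal p \<subseteq> set (arc m s L :: (nat + nat set \<times> 'b) list)" unfolding goodp_def by blast
  have "inj_on (colK Kt) (internal p)" using inj_arc[OF p(4), of s] p(5) by (rule inj_on_subset)
  then show "\<exists>p. is_path V CE p \<and> hd p = u \<and> last p = v \<and> inj_on (colK Kt) (internal p)"
    using p by blast
qed

end


lemma walk_pot:
  fixes F :: "'a \<Rightarrow> int"
  shows "walk E p \<Longrightarrow> p \<noteq> [] \<Longrightarrow> (\<And>y z. {y,z} \<in> E \<Longrightarrow> y \<in> set p \<Longrightarrow> z \<in> set p \<Longrightarrow> \<bar>F y - F z\<bar> \<le> 1)
    \<Longrightarrow> \<bar>F (hd p) - F (last p)\<bar> \<le> int (length p) - 1"
proof (induction E p rule: walk.induct)
  case (3 E x y p)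
  have "\<bar>F (hd (y#p)) - F (last (y#p))\<bar> \<le> int (length (y#p)) - 1"
    by (rule "3.IH") (use "3.prems" in auto)
  moreover have "\<bar>F x - F y\<bar> \<le> 1" using 3 by auto
  ultimately show ?case by simp
qed auto

lemma card_internal: "distinct p \<Longrightarrow> card (internal p) = length p - 2"
  by (simp add: internal_def distinct_card distinct_tl distinct_butlast)

lemma mem_internal: "p \<noteq> [] \<Longrightarrow> y \<in> set p \<Longrightarrow> y \<noteq> hd p \<Longrightarrow> y \<noteq> last p \<Longrightarrow> y \<in> internal p"
proof -
  assume p: "p \<noteq> []" and y: "y \<in> set p" "y \<noteq> hd p" "y \<noteq> last p"
  obtain z zs where pz: "p = z # zs" using p by (cases p) auto
  have yzs: "y \<in> set zs" using y pz by auto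
  then have zs: "zs \<noteq> []" by auto
  have "last p = last zs" using pz zs by simp
  moreover have "set zs = set (butlast zs) \<union> {last zs}" using zs
    by (metis append_butlast_last_id set_append empty_set list.simps(15) sup_bot.right_neutral)
  ultimately show ?thesis using yzs y pz by (auto simp: internal_def)
qed

context cor
begin

definition Fp :: "(nat \<Rightarrow> int) \<Rightarrow> (nat \<Rightarrow> int) \<Rightarrow> (nat + nat set \<times> 'b) \<Rightarrow> int" where
  "Fp g h y = (case y of Inl a \<Rightarrow> g a | Inr (e, _) \<Rightarrow> h (idx e))"

lemma pot_edge:
  assumes A1: "\<And>b. b < m \<Longrightarrow> b \<notin> X \<Longrightarrow> Suc b mod m \<notin> X \<Longrightarrow> \<bar>g b - g (Suc b mod m)\<bar> \<le> 1"
    and A2: "\<And>b u. b < m \<Longrightarrow> u \<in> ce m b \<Longrightarrow> u \<notin> X \<Longrightarrow> \<bar>h b - g u\<bar> \<le> 1"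
    and E: "{y,z} \<in> CE" and yX: "y \<notin> Inl ` X" and zX: "z \<notin> Inl ` X"
  shows "\<bar>Fp g h y - Fp g h z\<bar> \<le> 1"
proof -
  have yz: "y \<in> {y,z}" "z \<in> {y,z}" by auto
  from E consider
      (LL) u v where "{y,z} = {Inl u, Inl v}" "{u,v} \<in> cycle_E m"
    | (RR) e x x' where "{y,z} = {Inr (e,x), Inr (e,x')}"
    | (LR) u e hh where "{y,z} = {Inl u, Inr (e,hh)}" "e \<in> cycle_E m" "u \<in> e"
  proof -
    assume H1: "\<And>u v. {y,z} = {Inl u, Inl v} \<Longrightarrow> {u,v} \<in> cycle_E m \<Longrightarrow> thesis"
      and H2: "\<And>e x x'. {y,z} = {Inr (e,x), Inr (e,x')} \<Longrightarrow> thesis"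
      and H3: "\<And>u e hh. {y,z} = {Inl u, Inr (e,hh)} \<Longrightarrow> e \<in> cycle_E m \<Longrightarrow> u \<in> e \<Longrightarrow> thesis"
    have "{y,z} \<in> {{Inl u, Inl v} | u v. {u, v} \<in> cycle_E m} \<or>
      {y,z} \<in> {{Inr (e, x), Inr (e, y)} | e x y. e \<in> cycle_E m \<and> {x, y} \<in> EH} \<or>
      {y,z} \<in> {{Inl u, Inr (e, h)} | u e h. e \<in> cycle_E m \<and> u \<in> e \<and> h \<in> VH}"
      using E unfolding corona_E_def by (simp only: Un_iff disj_assoc)
    then show thesis
    proof (elim disjE)
      assume "{y,z} \<in> {{Inl u, Inl v} | u v. {u, v} \<in> cycle_E m}"
      then obtain u v where "{y,z} = {Inl u, Inl v}" "{u,v} \<in> cycle_E m" by blast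
      then show thesis by (rule H1)
    next
      assume "{y,z} \<in> {{Inr (e, x), Inr (e, y)} | e x y. e \<in> cycle_E m \<and> {x, y} \<in> EH}"
      then obtain e x x' where "{y,z} = {Inr (e,x), Inr (e,x')}" by blast
      then show thesis by (rule H2)
    next
      assume "{y,z} \<in> {{Inl u, Inr (e, h)} | u e h. e \<in> cycle_E m \<and> u \<in> e \<and> h \<in> VH}"
      then obtain u e hh where "{y,z} = {Inl u, Inr (e,hh)}" "e \<in> cycle_E m" "u \<in> e" by blast
      then show thesis by (rule H3)
    qed
  qed
  then show ?thesis
  proof cases
    case LL
    then obtain b where b: "b < m" "{u,v} = ce m b" by (auto simp: cycE)
    then have uv: "{y,z} = {Inl b, Inl (Suc b mod m)}" using LL(1) by (auto simp: ce_def)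
    then have nX: "b \<notin> X" "Suc b mod m \<notin> X" using yX zX by (auto simp: doubleton_eq_iff)
    have "\<bar>g b - g (Suc b mod m)\<bar> \<le> 1" using A1[OF b(1) nX] .
    moreover have "y \<in> {Inl b, Inl (Suc b mod m)}" "z \<in> {Inl b, Inl (Suc b mod m)}" using uv yz by auto
    ultimately show ?thesis by (auto simp: Fp_def)
  next
    case RR
    then have "y \<in> {Inr (e,x), Inr (e,x')}" "z \<in> {Inr (e,x), Inr (e,x')}" using yz by auto
    then show ?thesis by (auto simp: Fp_def)
  next
    case LR
    then obtain b where b: "b < m" "e = ce m b" by (auto simp: cycE)
    have uX: "u \<notin> X" using LR(1) yX zX by (auto simp: doubleton_eq_iff)
    have "\<bar>h b - g u\<bar> \<le> 1" using A2[OF b(1) _ uX] LR(3) b(2) by simp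
    moreover have "y \<in> {Inl u, Inr (e,hh)}" "z \<in> {Inl u, Inr (e,hh)}" using LR(1) yz by auto
    ultimately show ?thesis using b idx_ce by (auto simp: Fp_def)
  qed
qed

lemma pot_path:
  assumes A1: "\<And>b. b < m \<Longrightarrow> b \<notin> X \<Longrightarrow> Suc b mod m \<notin> X \<Longrightarrow> \<bar>g b - g (Suc b mod m)\<bar> \<le> 1"
    and A2: "\<And>b u. b < m \<Longrightarrow> u \<in> ce m b \<Longrightarrow> u \<notin> X \<Longrightarrow> \<bar>h b - g u\<bar> \<le> 1"
    and p: "is_path V CE p" and pX: "\<forall>y\<in>set p. y \<notin> Inl ` X"
  shows "\<bar>Fp g h (hd p) - Fp g h (last p)\<bar> \<le> int (length p) - 1"
proof -
  have w: "walk CE p" "p \<noteq> []" using p by (auto simp: is_path_walk)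
  show ?thesis
    by (rule walk_pot[OF w]) (use pot_edge[where g=g and h=h and X=X, OF A1 A2] pX in blast)
qed

lemma card_bound:
  assumes c: "rainbow_vertex_coloring V CE k c" and p: "is_path V CE p" and i: "inj_on c (internal p)"
  shows "card (internal p) \<le> k"
proof -
  have "internal p \<subseteq> V" using p
    by (auto simp: is_path_def internal_def dest: in_set_butlastD list.set_sel(2))
  then have "c ` internal p \<subseteq> {1..k}" using c by (auto simp: rainbow_vertex_coloring_def)
  then have "card (internal p) \<le> card {1..k}" using card_inj_on_le[OF i] by blast
  then show ?thesis by simp
qed

end


lemma shift_inj: "a < (m::nat) \<Longrightarrow> t < m \<Longrightarrow> t' < m \<Longrightarrow> (a+t) mod m = (a+t') mod m \<Longrightarrow> t = t'"
proof -
  assume a: "a < m" "t < m" "t' < m" "(a+t) mod m = (a+t') mod m"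
  have "(a+t) mod m = (if a+t < m then a+t else a+t-m)" using a by (intro modm) linarith
  moreover have "(a+t') mod m = (if a+t' < m then a+t' else a+t'-m)" using a by (intro modm) linarith
  ultimately show "t = t'" using a by (auto split: if_splits)
qed

lemma modm1: "n < 2*m \<Longrightarrow> n mod (m::nat) = (if n < m then n else n-m)"
  using modm[of n 0 m] by simp

context cor
begin

lemma lower_even: assumes mr: "m = 2*r" and c: "rainbow_vertex_coloring V CE k c" shows "r \<le> k"
proof -
  have r2: "r \<ge> 2" using m3 mr by linarith
  obtain h0 where h0: "h0 \<in> VH" using VHne by blast
  let ?u = "Inr (ce m 0, h0) :: nat + nat set \<times> 'b"
  let ?v = "Inr (ce m r, h0) :: nat + nat set \<times> 'b"
  have rm: "r < m" "0 < m" using mr r2 by auto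
  have uV: "?u \<in> V" "?v \<in> V" using rm h0 by (auto intro: inrV)
  obtain p where p: "is_path V CE p" "hd p = ?u" "last p = ?v" "inj_on c (internal p)"
    using c uV unfolding rainbow_vertex_coloring_def by blast
  define g where "g = (\<lambda>a::nat. if a = 0 then (1::int) else if a \<le> r then int a else int m + 1 - int a)"
  define h where "h = (\<lambda>b::nat. if b = 0 then (0::int) else if b = r then int r + 1 else g b)"
  have A1: "\<And>b. b < m \<Longrightarrow> b \<notin> {} \<Longrightarrow> Suc b mod m \<notin> {} \<Longrightarrow> \<bar>g b - g (Suc b mod m)\<bar> \<le> 1"
    using mr r2 by (auto simp: g_def suc_mod split: if_splits)
  have A2: "\<And>b u. b < m \<Longrightarrow> u \<in> ce m b \<Longrightarrow> u \<notin> {} \<Longrightarrow> \<bar>h b - g u\<bar> \<le> 1"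
    using mr r2 by (auto simp: h_def g_def ce_def suc_mod split: if_splits)
  have pX: "\<forall>y\<in>set p. y \<notin> Inl ` {}" by simp
  have "\<bar>Fp g h ?u - Fp g h ?v\<bar> \<le> int (length p) - 1" using pot_path[where g=g and h=h and X="{}", OF A1 A2 p(1) pX] p by simp
  moreover have "Fp g h ?u = 0" using rm by (simp add: Fp_def idx_ce h_def)
  moreover have "Fp g h ?v = int r + 1" using r2 rm by (simp add: Fp_def idx_ce h_def)
  ultimately have "int r + 2 \<le> int (length p)" by simp
  moreover have "card (internal p) = length p - 2" using p(1) by (simp add: is_path_def card_internal)
  ultimately have "r \<le> card (internal p)" by linarith
  also have "\<dots> \<le> k" using card_bound[OF c p(1) p(4)] .
  finally show ?thesis .
qed

lemma odd_window:
  assumes mr: "m = 2*r+1" and c: "rainbow_vertex_coloring V CE k c" and kr: "k \<le> r" and a: "a < m"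
  shows "inj_on (c \<circ> Inl) ((\<lambda>t. (a+t) mod m) ` {..<r}) \<and> (c \<circ> Inl) ` ((\<lambda>t. (a+t) mod m) ` {..<r}) = {1..k}"
proof -
  have r1: "r \<ge> 1" using m3 mr by linarith
  obtain h0 where h0: "h0 \<in> VH" using VHne by blast
  define pu where "pu = (if a = 0 then m-1 else a-1)"
  define qv where "qv = (a + r - 1) mod m"
  have pu: "pu < m" "Suc pu mod m = a" using a m3 by (auto simp: pu_def suc_mod)
  have qv: "qv < m" using m3 by (simp add: qv_def)
  have qv2: "Suc qv mod m = (a+r) mod m" unfolding qv_def mod_Suc_eq using r1 by simp
  have puqv: "pu \<noteq> qv"
  proof
    assume e: "pu = qv"
    have "(a+r-1) mod m = (if a+r-1 < m then a+r-1 else a+r-1-m)" using a mr by (intro modm1) linarith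
    then show False using e a mr r1 by (auto simp: pu_def qv_def split: if_splits)
  qed
  let ?u = "Inr (ce m pu, h0) :: nat + nat set \<times> 'b"
  let ?v = "Inr (ce m qv, h0) :: nat + nat set \<times> 'b"
  have uV: "?u \<in> V" "?v \<in> V" using pu qv h0 by (auto intro: inrV)
  obtain p where p: "is_path V CE p" "hd p = ?u" "last p = ?v" "inj_on c (internal p)"
    using c uV unfolding rainbow_vertex_coloring_def by blast
  have cp: "card (internal p) \<le> k" using card_bound[OF c p(1) p(4)] .
  have cl: "card (internal p) = length p - 2" using p(1) by (simp add: is_path_def card_internal)
  have key: "Inl ((a+t) mod m) \<in> set p" if t: "t < r" for t
  proof (rule ccontr)
    assume nin: "Inl ((a+t) mod m) \<notin> set p"
    define x where "x = (a+t) mod m"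
    have xm: "x < m" using m3 by (simp add: x_def)
    define g where "g = (\<lambda>y::nat. if x < y then int y - int x - 1 else int y - int x - 1 + int m)"
    define h where "h = (\<lambda>b. if b = qv then g (Suc b mod m) - 1 else g (Suc b mod m))"
    have gs: "g (Suc b mod m) = g b + 1" if "b < m" "b \<noteq> x" for b
    proof -
      have sm: "Suc b mod m = (if Suc b < m then Suc b else 0)" using that(1) by (rule suc_mod)
      show ?thesis
      proof (cases "Suc b < m")
        case True
        then have "Suc b mod m = Suc b" using sm by simp
        moreover have "(x < Suc b) = (x < b)" using that(2) by linarith
        ultimately show ?thesis unfolding g_def by simp
      next
        case False
        then have "Suc b mod m = 0" "b = m - 1" using sm that by auto
        moreover have "x < b" using that xm \<open>b = m - 1\<close> by linarith
        ultimately show ?thesis unfolding g_def using xm by simp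
      qed
    qed
    have A1: "\<And>b. b < m \<Longrightarrow> b \<notin> {x} \<Longrightarrow> Suc b mod m \<notin> {x} \<Longrightarrow> \<bar>g b - g (Suc b mod m)\<bar> \<le> 1"
      using gs by simp
    have A2: "\<bar>h b - g u\<bar> \<le> 1" if bu: "b < m" "u \<in> ce m b" "u \<notin> {x}" for b u
    proof -
      have hb: "h b = g (Suc b mod m) \<or> h b = g (Suc b mod m) - 1" by (simp add: h_def)
      have "u = b \<or> u = Suc b mod m" using bu(2) by (simp add: ce_def)
      then show ?thesis
      proof
        assume ub: "u = b"
        then have "g (Suc b mod m) = g b + 1" using gs bu by simp
        then show ?thesis using hb ub by auto
      next
        assume "u = Suc b mod m"
        then show ?thesis using hb by auto
      qed
    qed
    have pX: "\<forall>y\<in>set p. y \<notin> Inl ` {x}" using nin x_def by auto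
    have "\<bar>Fp g h ?u - Fp g h ?v\<bar> \<le> int (length p) - 1" using pot_path[where g=g and h=h and X="{x}", OF A1 A2 p(1) pX] p by simp
    moreover have "Fp g h ?u = g a" using pu puqv by (simp add: Fp_def idx_ce h_def)
    moreover have "Fp g h ?v = g ((a+r) mod m) - 1" using qv qv2 by (simp add: Fp_def idx_ce h_def)
    moreover have "g a = int m - int t - 1"
    proof -
      have xe: "x = (if a+t < m then a+t else a+t-m)" unfolding x_def using a t mr by (intro modm) linarith
      show ?thesis
      proof (cases "a+t < m")
        case True
        then have xe': "x = a+t" using xe by simp
        then have "\<not> x < a" by simp
        then have "g a = int a - int x - 1 + int m" by (simp add: g_def)
        then show ?thesis using xe' by simp
      next
        case False
        then have xe': "x = a+t-m" using xe by simp
        then have "x < a" using t mr False by linarith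
        then have "g a = int a - int x - 1" by (simp add: g_def)
        moreover have "int x = int a + int t - int m" using xe' False by simp
        ultimately show ?thesis by simp
      qed
    qed
    moreover have "g ((a+r) mod m) = int r - int t - 1"
    proof -
      have xe: "x = (if a+t < m then a+t else a+t-m)" unfolding x_def using a t mr by (intro modm) linarith
      have ye: "(a+r) mod m = (if a+r < m then a+r else a+r-m)" using a mr by (intro modm) linarith
      define y where "y = (a+r) mod m"
      have "int y - int x = int r - int t \<and> x < y \<or> int y - int x = int r - int t - int m \<and> \<not> x < y"
      proof (cases "a+r < m")
        case True
        then have "y = a + r" "x = a + t" using ye xe t y_def by auto
        then show ?thesis using t by simp
      next
        case False
        then have y: "y = a + r - m" using ye y_def by simp
        show ?thesis
        proof (cases "a+t < m")
          case True
          then have "x = a + t" using xe by simp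
          then show ?thesis using y False True t a mr by auto
        next
          case False2: False
          then have "x = a + t - m" using xe by simp
          then show ?thesis using y False False2 t a mr by auto
        qed
      qed
      then show ?thesis unfolding y_def g_def by auto
    qed
    ultimately have "int r + 3 \<le> int (length p)" using mr by linarith
    then show False using cp cl kr by linarith
  qed
  define W where "W = (\<lambda>t. (a+t) mod m) ` {..<r}"
  have sub: "Inl ` W \<subseteq> internal p"
  proof
    fix z :: "nat + nat set \<times> 'b" assume "z \<in> Inl ` W"
    then obtain t where t: "t < r" "z = Inl ((a+t) mod m)" by (auto simp: W_def)
    have "p \<noteq> []" using p(1) by (simp add: is_path_def)
    then show "z \<in> internal p" using key[OF t(1)] t p by (intro mem_internal) auto
  qed
  have injW: "inj_on (c \<circ> Inl) W"
  proof (rule inj_onI)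
    fix y y' assume yy: "y \<in> W" "y' \<in> W" "(c \<circ> Inl) y = (c \<circ> Inl) y'"
    have ij: "inj_on c (Inl ` W)" using inj_on_subset[OF p(4) sub] .
    have "Inl y = (Inl y' :: nat + nat set \<times> 'b)"
      by (rule inj_onD[OF ij]) (use yy in auto)
    then show "y = y'" by simp
  qed
  have injT: "inj_on (\<lambda>t. (a+t) mod m) {..<r}"
  proof (rule inj_onI)
    fix t t' assume tt: "t \<in> {..<r}" "t' \<in> {..<r}" "(a+t) mod m = (a+t') mod m"
    have "t < m" "t' < m" using tt mr by auto
    then show "t = t'" using shift_inj[of a m t t'] a tt(3) by blast
  qed
  have cW: "card W = r" unfolding W_def using card_image[OF injT] by simp
  have img: "(c \<circ> Inl) ` W \<subseteq> {1..k}"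
  proof
    fix z assume "z \<in> (c \<circ> Inl) ` W"
    then obtain t where t: "t < r" "z = c (Inl ((a+t) mod m))" by (auto simp: W_def)
    have "Inl ((a+t) mod m) \<in> V" using m3 by (intro inlV) simp
    then show "z \<in> {1..k}" using c t by (auto simp: rainbow_vertex_coloring_def)
  qed
  have ci: "card ((c \<circ> Inl) ` W) = r" using card_image[OF injW] cW by simp
  have "r \<le> k" using card_mono[OF _ img] ci by simp
  then have "card ((c \<circ> Inl) ` W) = card {1..k}" using ci kr by simp
  then have "(c \<circ> Inl) ` W = {1..k}" using card_subset_eq[OF _ img] by simp
  then show ?thesis using injW W_def by simp
qed

end


lemma ceil_half: "nat \<lceil>real m / 2\<rceil> = m - m div 2"
proof (cases "even m")
  case True
  then obtain q where q: "m = 2*q" by blast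
  then have "real m / 2 = real q" by simp
  then show ?thesis using q by simp
next
  case False
  then obtain q where q: "m = 2*q+1" using oddE by blast
  have "\<lceil>real m / 2\<rceil> = int q + 1"
    by (rule ceiling_unique) (use q in simp_all)
  then show ?thesis using q by simp
qed

context cor
begin

lemma lower_odd:
  assumes mr: "m = 2*r+1" and r2: "2 \<le> r" and c: "rainbow_vertex_coloring V CE k c" and kr: "k \<le> r"
  shows False
proof -
  define col where "col = c \<circ> Inl"
  have win: "inj_on col ((\<lambda>t. (a+t) mod m) ` {..<r}) \<and> col ` ((\<lambda>t. (a+t) mod m) ` {..<r}) = {1..k}"
    if "a < m" for a
    unfolding col_def by (rule odd_window[OF mr c kr that])
  have colV: "col y \<in> {1..k}" if "y < m" for y
  proof -
    have "(Inl y :: nat + nat set \<times> 'b) \<in> V" using that by (rule inlV)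
    then show ?thesis using c by (simp add: col_def rainbow_vertex_coloring_def)
  qed
  have winj: "col ((a+t) mod m) \<noteq> col ((a+t') mod m)"
    if "a < m" "t < r" "t' < r" "t \<noteq> t'" for a t t'
  proof
    assume e: "col ((a+t) mod m) = col ((a+t') mod m)"
    have "(a+t) mod m \<in> (\<lambda>t. (a+t) mod m) ` {..<r}" "(a+t') mod m \<in> (\<lambda>t. (a+t) mod m) ` {..<r}"
      using that by auto
    then have "(a+t) mod m = (a+t') mod m" using win[OF that(1)] e by (meson inj_onD)
    moreover have "t < m" "t' < m" using that mr by auto
    ultimately show False using shift_inj[of a m t t'] that by blast
  qed
  have wsurj: "\<exists>t<r. col ((a+t) mod m) = y" if "a < m" "y \<in> {1..k}" for a y
  proof -
    have "y \<in> col ` ((\<lambda>t. (a+t) mod m) ` {..<r})" using win[OF that(1)] that(2) by simp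
    then show ?thesis by auto
  qed
  have rm: "r < m" "0 < m" "1 < m" "r + 2 < m" using mr r2 by auto
  have c0r: "col 0 = col r"
  proof -
    obtain t where t: "t < r" "col ((0+t) mod m) = col r" using wsurj[OF rm(2) colV[OF rm(1)]] by blast
    have t': "(0+t) mod m = t" using t rm by simp
    show ?thesis
    proof (cases "t = 0")
      case True then show ?thesis using t t' by simp
    next
      case False
      have "col ((1+(t-1)) mod m) \<noteq> col ((1+(r-1)) mod m)"
        using winj[OF rm(3), of "t-1" "r-1"] t False r2 by simp
      moreover have "(1+(t-1)) mod m = t" "(1+(r-1)) mod m = r" using t False r2 rm by auto
      ultimately show ?thesis using t t' by simp
    qed
  qed
  have cr2r: "col r = col (2*r)"
  proof -
    have m2: "2*r < m" using mr by simp
    obtain t where t: "t < r" "col ((r+t) mod m) = col (2*r)" using wsurj[OF rm(1) colV[OF m2]] by blast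
    have t': "(r+t) mod m = r+t" using t mr by simp
    show ?thesis
    proof (cases "t = 0")
      case True then show ?thesis using t t' by simp
    next
      case False
      have r1m: "r + 1 < m" using rm by simp
      have "col ((r+1+(t-1)) mod m) \<noteq> col ((r+1+(r-1)) mod m)"
        using winj[OF r1m, of "t-1" "r-1"] t False r2 by simp
      moreover have "(r+1+(t-1)) mod m = r+t" "(r+1+(r-1)) mod m = 2*r" using t False r2 mr by auto
      ultimately show ?thesis using t t' by simp
    qed
  qed
  have w: "col ((r+2+(r-2)) mod m) \<noteq> col ((r+2+(r-1)) mod m)"
    by (rule winj) (use rm r2 in auto)
  have e1: "(r+2+(r-2)) mod m = 2*r" using r2 mr by simp
  have "r+2+(r-1) = m" using r2 mr by simp
  then have e2: "(r+2+(r-1)) mod m = 0" by simp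
  from w have "col (2*r) \<noteq> col 0" by (simp only: e1 e2 not_False_eq_True)
  then show False using c0r cr2r by simp
qed

end

theorem theorem6:
  fixes m n :: nat and VH :: "'b set" and EH :: "'b set set"
  assumes "m \<ge> 3" and "n \<ge> 2"
    and "simple_graph VH EH" and "connected_graph VH EH" and "card VH = n"
  shows "rvc (corona_V (cycle_V m) (cycle_E m) VH)
             (corona_E (cycle_V m) (cycle_E m) VH EH)
         = (if m = 3 then 1 else nat \<lceil>real m / 2\<rceil>)"
proof -
  have VHne: "VH \<noteq> {}" using assms(2,5) by auto
  interpret cor m VH EH using assms(1) VHne by unfold_locales auto
  have K: "Kt = (if m = 3 then 1 else nat \<lceil>real m / 2\<rceil>)" by (simp add: Kt_def ceil_half)
  have "rvc V CE = Kt" unfolding rvc_def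
  proof (rule Least_equality)
    show "\<exists>c. rainbow_vertex_coloring V CE Kt c" using upper by blast
  next
    fix k assume "\<exists>c. rainbow_vertex_coloring V CE k c"
    then obtain c where c: "rainbow_vertex_coloring V CE k c" by blast
    show "Kt \<le> k"
    proof (cases "m = 3")
      case True
      have "Inl 0 \<in> V" using assms(1) by (intro inlV) simp
      then have "c (Inl 0) \<in> {1..k}" using c by (simp add: rainbow_vertex_coloring_def)
      moreover have "Kt = 1" unfolding Kt_def using True by simp
      ultimately show ?thesis by simp
    next
      case False
      then have m4: "4 \<le> m" using assms(1) by simp
      have KK: "Kt = m - m div 2" unfolding Kt_def using False by simp
      show ?thesis
      proof (cases "even m")
        case True
        then obtain r where r: "m = 2*r" by blast
        have "r \<le> k" by (rule lower_even[OF r c])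
        then show ?thesis using r KK by simp
      next
        case odd: False
        then obtain r where r: "m = 2*r+1" using oddE by blast
        have r2: "2 \<le> r" using r m4 by simp
        have "\<not> k \<le> r" using lower_odd[OF r r2 c] by blast
        then show ?thesis using r KK by simp
      qed
    qed
  qed
  then show ?thesis using K by simp
qed

end
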